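(* For every integer $n\ge 2$, $$\sum_{\substack{b\ge 1,\ k\ge 0\\ 2b+k=n}} \#\mathrm{SYT}^{+k}\big((b,b)\big) = \mathrm{Cat}(n-1),$$ where $\mathrm{Cat}(m)=\frac{1}{m+1}\binom{2m}{m}$ is the $m$-th Catalan number.
   Context: For a partition $\lambda$ of $N$ (identified with its Ferrers diagram, cells in matrix coordinates $(\text{row},\text{column})$) and an integer $k\ge 0$, $\mathrm{SYT}^{+k}(\lambda)$ denotes the set of set-valued standard Young tableaux of shape $\lambda$ with entries in $[N+k]$: fillings $S$ of the cells of $\lambda$ by nonempty sets of positive integers such that (1) the sets $S(u)$ form a set partition of $[N+k]$, and (2) whenever $u\neq v$ and $u$ is weakly north and weakly west of $v$, $\max S(u)<\min S(v)$. The shape $(b,b)$ is the $2\times b$ rectangle. *)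

theory Defs
  imports Main
begin

definition is_partition :: "nat list \<Rightarrow> bool" where
  "is_partition lam \<longleftrightarrow> sorted (rev lam) \<and> (\<forall>x\<in>set lam. 0 < x)"

definition ferrers :: "nat list \<Rightarrow> (nat \<times> nat) set" where
  "ferrers lam = {(i, j). i < length lam \<and> j < lam ! i}"

text \<open>A filling is a function from cells to sets of positive integers;
it is required to be empty outside the diagram (so that the set of such
fillings is the set of fillings of the cells of lam).\<close>

definition SYT_plus :: "nat \<Rightarrow> nat list \<Rightarrow> ((nat \<times> nat) \<Rightarrow> nat set) set" where
  "SYT_plus k lam =
    {S. (\<forall>u. u \<notin> ferrers lam \<longrightarrow> S u = {})
      \<and> (\<forall>u\<in>ferrers lam. S u \<noteq> {})
      \<and> (\<Union>u\<in>ferrers lam. S u) = {1..sum_list lam + k}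
      \<and> (\<forall>u\<in>ferrers lam. \<forall>v\<in>ferrers lam. u \<noteq> v \<longrightarrow> S u \<inter> S v = {})
      \<and> (\<forall>u\<in>ferrers lam. \<forall>v\<in>ferrers lam.
            u \<noteq> v \<and> fst u \<le> fst v \<and> snd u \<le> snd v \<longrightarrow> Max (S u) < Min (S v))}"

definition catalan :: "nat \<Rightarrow> nat" where
  "catalan m = ((2 * m) choose m) div (m + 1)"

end

theory Submission imports Defs begin

definition Tg :: "(nat\<times>nat) set \<Rightarrow> nat \<Rightarrow> ((nat\<times>nat) \<Rightarrow> nat set) set" where
"Tg F m = {S. (\<forall>u. u\<notin>F \<longrightarrow> S u = {}) \<and> (\<forall>u\<in>F. S u \<noteq> {}) \<and> (\<Union>u\<in>F. S u) = {1..m}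
   \<and> (\<forall>u\<in>F. \<forall>v\<in>F. u\<noteq>v \<longrightarrow> S u \<inter> S v = {})
   \<and> (\<forall>u\<in>F. \<forall>v\<in>F. u \<noteq> v \<and> fst u \<le> fst v \<and> snd u \<le> snd v \<longrightarrow> (\<forall>x\<in>S u. \<forall>y\<in>S v. x < y))}"

lemma Tg_union: "S \<in> Tg F m \<Longrightarrow> (\<Union>u\<in>F. S u) = {1..m}"
  unfolding Tg_def by simp

lemma Tg_sub: "S \<in> Tg F m \<Longrightarrow> v \<in> F \<Longrightarrow> S v \<subseteq> {1..m}"
  using Tg_union[of S F m] by blast

lemma Tg_fin: assumes "finite F" shows "finite (Tg F m)"
proof -
  have "Tg F m \<subseteq> {f. \<forall>x. (x \<in> F \<longrightarrow> f x \<in> Pow {1..m}) \<and> (x \<notin> F \<longrightarrow> f x = {})}"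
    using Tg_sub by (auto simp: Tg_def)
  moreover have "finite {f. \<forall>x. (x \<in> F \<longrightarrow> f x \<in> Pow {1..m}) \<and> (x \<notin> F \<longrightarrow> f x = ({}::nat set))}"
    by (rule finite_set_of_finite_funs) (auto simp: assms)
  ultimately show ?thesis by (rule finite_subset)
qed

lemma Tg_out: "S \<in> Tg F m \<Longrightarrow> u \<notin> F \<Longrightarrow> S u = {}"
  unfolding Tg_def mem_Collect_eq by (drule conjunct1, drule spec[of _ u], erule mp)
lemma Tg_ne: "S \<in> Tg F m \<Longrightarrow> u \<in> F \<Longrightarrow> S u \<noteq> {}"
  unfolding Tg_def mem_Collect_eq by (drule conjunct2, drule conjunct1, erule bspec)
lemma Tg_disj: "S \<in> Tg F m \<Longrightarrow> u \<in> F \<Longrightarrow> v \<in> F \<Longrightarrow> u \<noteq> v \<Longrightarrow> x \<in> S u \<Longrightarrow> x \<in> S v \<Longrightarrow> False"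
  unfolding Tg_def mem_Collect_eq by (drule conjunct2, drule conjunct2, drule conjunct2, drule conjunct1) blast
lemma Tg_ord: "S \<in> Tg F m \<Longrightarrow> u \<in> F \<Longrightarrow> v \<in> F \<Longrightarrow> u \<noteq> v \<Longrightarrow> fst u \<le> fst v \<Longrightarrow> snd u \<le> snd v
   \<Longrightarrow> x \<in> S u \<Longrightarrow> y \<in> S v \<Longrightarrow> x < y"
  unfolding Tg_def mem_Collect_eq by (drule conjunct2, drule conjunct2, drule conjunct2, drule conjunct2) blast
lemma Tg_I:
  assumes "\<And>u. u \<notin> F \<Longrightarrow> S u = {}" "\<And>u. u \<in> F \<Longrightarrow> S u \<noteq> {}" "(\<Union>u\<in>F. S u) = {1..m}"
    "\<And>u v x. u \<in> F \<Longrightarrow> v \<in> F \<Longrightarrow> u \<noteq> v \<Longrightarrow> x \<in> S u \<Longrightarrow> x \<in> S v \<Longrightarrow> False"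
    "\<And>u v x y. u \<in> F \<Longrightarrow> v \<in> F \<Longrightarrow> u \<noteq> v \<Longrightarrow> fst u \<le> fst v \<Longrightarrow> snd u \<le> snd v
      \<Longrightarrow> x \<in> S u \<Longrightarrow> y \<in> S v \<Longrightarrow> x < y"
  shows "S \<in> Tg F m"
  unfolding Tg_def mem_Collect_eq
proof (intro conjI)
  show "\<forall>u. u \<notin> F \<longrightarrow> S u = {}" using assms(1) by blast
  show "\<forall>u\<in>F. S u \<noteq> {}" using assms(2) by blast
  show "(\<Union>u\<in>F. S u) = {1..m}" by (rule assms(3))
  show "\<forall>u\<in>F. \<forall>v\<in>F. u \<noteq> v \<longrightarrow> S u \<inter> S v = {}" using assms(4) by blast
  show "\<forall>u\<in>F. \<forall>v\<in>F. u \<noteq> v \<and> fst u \<le> fst v \<and> snd u \<le> snd v \<longrightarrow> (\<forall>x\<in>S u. \<forall>y\<in>S v. x < y)"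
    using assms(5) by blast
qed

lemma SYT_eq: "SYT_plus k lam = Tg (ferrers lam) (sum_list lam + k)"
proof -
  have key: "Max A < Min B \<longleftrightarrow> (\<forall>x\<in>A. \<forall>y\<in>B. x < y)" if "finite A" "finite B" "A \<noteq> {}" "B \<noteq> {}" for A B :: "nat set"
    using that by (auto simp: Max_less_iff Min_gr_iff)
  have ord: "(\<forall>u\<in>ferrers lam. \<forall>v\<in>ferrers lam. u \<noteq> v \<and> fst u \<le> fst v \<and> snd u \<le> snd v \<longrightarrow> Max (S u) < Min (S v))
     \<longleftrightarrow> (\<forall>u\<in>ferrers lam. \<forall>v\<in>ferrers lam. u \<noteq> v \<and> fst u \<le> fst v \<and> snd u \<le> snd v \<longrightarrow> (\<forall>x\<in>S u. \<forall>y\<in>S v. x < y))"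
    if H: "(\<Union>u\<in>ferrers lam. S u) = {1..sum_list lam + k}" "\<forall>u\<in>ferrers lam. S u \<noteq> {}" for S
  proof -
    have fin: "finite (S u)" if "u \<in> ferrers lam" for u
      using H(1) that by (metis UN_upper finite_atLeastAtMost finite_subset)
    have e: "Max (S u) < Min (S v) \<longleftrightarrow> (\<forall>x\<in>S u. \<forall>y\<in>S v. x < y)" if "u \<in> ferrers lam" "v \<in> ferrers lam" for u v
      using key[OF fin[OF that(1)] fin[OF that(2)]] H(2) that by blast
    show ?thesis
      apply (rule ball_cong[OF refl])+
      apply (rule imp_cong[OF refl])
      apply (rule e)
       apply assumption+
      done
  qed
  show ?thesis
    unfolding SYT_plus_def Tg_def
    apply (rule Collect_cong)
    apply (rule conj_cong[OF refl])+
    apply (rule ord)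
     apply assumption+
    done
qed

definition maxcell :: "(nat\<times>nat) set \<Rightarrow> nat\<times>nat \<Rightarrow> bool" where
"maxcell F u \<longleftrightarrow> u\<in>F \<and> (\<forall>v\<in>F. fst u \<le> fst v \<and> snd u \<le> snd v \<longrightarrow> v = u)"

lemma maxcellD: "maxcell F u \<Longrightarrow> v \<in> F \<Longrightarrow> fst u \<le> fst v \<Longrightarrow> snd u \<le> snd v \<Longrightarrow> v = u"
  unfolding maxcell_def by blast

lemma Tg_top_only:
  assumes S: "S \<in> Tg F (Suc m)" and u: "u \<in> F" "Suc m \<in> S u" and v: "v \<in> F" "v \<noteq> u"
  shows "Suc m \<notin> S v"
  using Tg_disj[OF S u(1) v(1)] v(2) u(2) by metis

lemma Tg_top_max:
  assumes S: "S \<in> Tg F (Suc m)" and u: "u \<in> F" "Suc m \<in> S u"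
  shows "maxcell F u"
  unfolding maxcell_def
proof (intro conjI ballI impI)
  fix v assume v: "v \<in> F" "fst u \<le> fst v \<and> snd u \<le> snd v"
  show "v = u"
  proof (rule ccontr)
    assume vu: "v \<noteq> u"
    obtain y where y: "y \<in> S v" using Tg_ne[OF S v(1)] by blast
    have "y \<le> Suc m" using Tg_sub[OF S v(1)] y by auto
    moreover have "Suc m < y" using Tg_ord[OF S u(1) v(1) vu[symmetric] _ _ u(2) y] v(2) by simp
    ultimately show False by simp
  qed
qed (rule u(1))

lemma card_X1:
  assumes mc: "maxcell F u"
  shows "card {S\<in>Tg F (Suc m). Suc m \<in> S u \<and> S u \<noteq> {Suc m}} = card (Tg F m)"
proof -
  have uF: "u \<in> F" using mc by (simp add: maxcell_def)
  let ?A = "{S\<in>Tg F (Suc m). Suc m \<in> S u \<and> S u \<noteq> {Suc m}}"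
  let ?f = "\<lambda>S. S(u := S u - {Suc m})"
  let ?g = "\<lambda>S. S(u := insert (Suc m) (S u))"
  have "bij_betw ?f ?A (Tg F m)"
  proof (rule bij_betw_byWitness[where f'="?g"])
    show "\<forall>S\<in>?A. ?g (?f S) = S" by (auto simp: fun_eq_iff)
    show "\<forall>S\<in>Tg F m. ?f (?g S) = S"
    proof
      fix S assume "S \<in> Tg F m"
      then have "Suc m \<notin> S u" using Tg_sub[of S F m u] uF by auto
      then show "?f (?g S) = S" by (auto simp: fun_eq_iff)
    qed
    show "?f ` ?A \<subseteq> Tg F m"
    proof
      fix T assume "T \<in> ?f ` ?A"
      then obtain S where S: "S \<in> Tg F (Suc m)" "Suc m \<in> S u" "S u \<noteq> {Suc m}" and T: "T = ?f S" by auto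
      have Tv: "T v = (if v = u then S u - {Suc m} else S v)" for v unfolding T by simp
      have oth: "Suc m \<notin> S v" if "v \<in> F" "v \<noteq> u" for v using Tg_top_only[OF S(1) uF S(2) that] .
      have un: "(\<Union>v\<in>F. S v) = {1..Suc m}" using Tg_union[OF S(1)] .
      have "(\<Union>v\<in>F. T v) = (\<Union>v\<in>F. S v) - {Suc m}"
        using oth uF unfolding Tv by auto
      also have "\<dots> = {1..m}" using un by auto
      finally have U: "(\<Union>v\<in>F. T v) = {1..m}" .
      show "T \<in> Tg F m"
      proof (rule Tg_I[OF _ _ U])
        fix v assume "v \<notin> F" then show "T v = {}" using uF Tg_out[OF S(1)] unfolding Tv by auto
      next
        fix v assume "v \<in> F" then show "T v \<noteq> {}" using S(2,3) Tg_ne[OF S(1)] unfolding Tv by auto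
      next
        fix v w x assume vw: "v \<in> F" "w \<in> F" "v \<noteq> w" "x \<in> T v" "x \<in> T w"
        then have "x \<in> S v" "x \<in> S w" unfolding Tv by (auto split: if_splits)
        then show False using Tg_disj[OF S(1) vw(1-3)] by blast
      next
        fix v w x y assume vw: "v \<in> F" "w \<in> F" "v \<noteq> w" "fst v \<le> fst w" "snd v \<le> snd w" "x \<in> T v" "y \<in> T w"
        then have "x \<in> S v" "y \<in> S w" unfolding Tv by (auto split: if_splits)
        then show "x < y" using Tg_ord[OF S(1) vw(1-5)] by blast
      qed
    qed
    show "?g ` Tg F m \<subseteq> ?A"
    proof
      fix T assume "T \<in> ?g ` Tg F m"
      then obtain S where S: "S \<in> Tg F m" and T: "T = ?g S" by auto
      have Tv: "T v = (if v = u then insert (Suc m) (S u) else S v)" for v unfolding T by simp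
      have sub: "x \<le> m" if "v \<in> F" "x \<in> S v" for v x using Tg_sub[OF S that(1)] that(2) by auto
      have ne: "S u \<noteq> {}" using Tg_ne[OF S uF] .
      have un: "(\<Union>v\<in>F. S v) = {1..m}" using Tg_union[OF S] .
      have "(\<Union>v\<in>F. T v) = insert (Suc m) (\<Union>v\<in>F. S v)"
        using uF unfolding Tv by auto
      then have U: "(\<Union>v\<in>F. T v) = {1..Suc m}" using un by auto
      have "T \<in> Tg F (Suc m)"
      proof (rule Tg_I[OF _ _ U])
        fix v assume "v \<notin> F" then show "T v = {}" using uF Tg_out[OF S] unfolding Tv by auto
      next
        fix v assume "v \<in> F" then show "T v \<noteq> {}" using Tg_ne[OF S] unfolding Tv by auto
      next
        fix v w x assume vw: "v \<in> F" "w \<in> F" "v \<noteq> w" "x \<in> T v" "x \<in> T w"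
        show False
        proof (cases "v = u \<or> w = u")
          case True
          then show False using vw sub[of v x] sub[of w x] Tg_disj[OF S vw(1,2,3), of x] unfolding Tv
            by (auto split: if_splits)
        next
          case False
          then show False using vw Tg_disj[OF S vw(1,2,3), of x] unfolding Tv by auto
        qed
      next
        fix v w x y assume vw: "v \<in> F" "w \<in> F" "v \<noteq> w" "fst v \<le> fst w" "snd v \<le> snd w" "x \<in> T v" "y \<in> T w"
        have vu: "v \<noteq> u" using maxcellD[OF mc vw(2)] vw by auto
        then have xS: "x \<in> S v" using vw(6) unfolding Tv by auto
        show "x < y"
        proof (cases "w = u")
          case True
          then have "y = Suc m \<or> y \<in> S w" using vw(7) unfolding Tv by auto
          then show ?thesis using sub[OF vw(1) xS] Tg_ord[OF S vw(1-5) xS] by auto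
        next
          case False
          then have "y \<in> S w" using vw(7) unfolding Tv by auto
          then show ?thesis using Tg_ord[OF S vw(1-5) xS] by auto
        qed
      qed
      moreover have "Suc m \<in> T u" unfolding Tv by auto
      moreover have "T u \<noteq> {Suc m}"
      proof
        assume "T u = {Suc m}"
        then have "S u \<subseteq> {Suc m}" unfolding Tv by auto
        moreover obtain x where "x \<in> S u" using ne by blast
        ultimately show False using sub[OF uF] by fastforce
      qed
      ultimately show "T \<in> ?A" by blast
    qed
  qed
  then show ?thesis by (rule bij_betw_same_card)
qed

lemma card_X2:
  assumes mc: "maxcell F u"
  shows "card {S\<in>Tg F (Suc m). S u = {Suc m}} = card (Tg (F - {u}) m)"
proof -
  have uF: "u \<in> F" using mc by (simp add: maxcell_def)
  let ?A = "{S\<in>Tg F (Suc m). S u = {Suc m}}"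
  let ?f = "\<lambda>S. S(u := {})"
  let ?g = "\<lambda>S. S(u := {Suc m})"
  have "bij_betw ?f ?A (Tg (F - {u}) m)"
  proof (rule bij_betw_byWitness[where f'="?g"])
    show "\<forall>S\<in>?A. ?g (?f S) = S" by (auto simp: fun_eq_iff)
    show "\<forall>S\<in>Tg (F - {u}) m. ?f (?g S) = S"
    proof
      fix S assume "S \<in> Tg (F - {u}) m"
      then have "S u = {}" using Tg_out by blast
      then show "?f (?g S) = S" by (auto simp: fun_eq_iff)
    qed
    show "?f ` ?A \<subseteq> Tg (F - {u}) m"
    proof
      fix T assume "T \<in> ?f ` ?A"
      then obtain S where S: "S \<in> Tg F (Suc m)" "S u = {Suc m}" and T: "T = ?f S" by auto
      have Tv: "T v = (if v = u then {} else S v)" for v unfolding T by simp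
      have oth: "Suc m \<notin> S v" if "v \<in> F" "v \<noteq> u" for v using Tg_top_only[OF S(1) uF _ that] S(2) by auto
      have un: "(\<Union>v\<in>F. S v) = {1..Suc m}" using Tg_union[OF S(1)] .
      have "(\<Union>v\<in>F - {u}. T v) = (\<Union>v\<in>F. S v) - {Suc m}"
        using oth uF S(2) unfolding Tv by auto
      also have "\<dots> = {1..m}" using un by auto
      finally have U: "(\<Union>v\<in>F - {u}. T v) = {1..m}" .
      show "T \<in> Tg (F - {u}) m"
      proof (rule Tg_I[OF _ _ U])
        fix v assume v: "v \<notin> F - {u}"
        show "T v = {}"
        proof (cases "v = u")
          case False
          then have "v \<notin> F" using v by blast
          then show ?thesis using Tg_out[OF S(1), of v] False unfolding Tv by simp
        qed (simp add: Tv)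
      next
        fix v assume "v \<in> F - {u}" then show "T v \<noteq> {}" using Tg_ne[OF S(1)] unfolding Tv by auto
      next
        fix v w x assume vw: "v \<in> F - {u}" "w \<in> F - {u}" "v \<noteq> w" "x \<in> T v" "x \<in> T w"
        then have "x \<in> S v" "x \<in> S w" unfolding Tv by auto
        then show False using Tg_disj[OF S(1) _ _ vw(3)] vw(1,2) by blast
      next
        fix v w x y assume vw: "v \<in> F - {u}" "w \<in> F - {u}" "v \<noteq> w" "fst v \<le> fst w" "snd v \<le> snd w" "x \<in> T v" "y \<in> T w"
        then have "x \<in> S v" "y \<in> S w" unfolding Tv by auto
        then show "x < y" using Tg_ord[OF S(1) _ _ vw(3-5)] vw(1,2) by blast
      qed
    qed
    show "?g ` Tg (F - {u}) m \<subseteq> ?A"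
    proof
      fix T assume "T \<in> ?g ` Tg (F - {u}) m"
      then obtain S where S: "S \<in> Tg (F - {u}) m" and T: "T = ?g S" by auto
      have Tv: "T v = (if v = u then {Suc m} else S v)" for v unfolding T by simp
      have sub: "x \<le> m" if "v \<in> F" "v \<noteq> u" "x \<in> S v" for v x using Tg_sub[OF S, of v] that by auto
      have un: "(\<Union>v\<in>F - {u}. S v) = {1..m}" using Tg_union[OF S] .
      have "(\<Union>v\<in>F. T v) = insert (Suc m) (\<Union>v\<in>F - {u}. S v)"
        using uF unfolding Tv by auto
      then have U: "(\<Union>v\<in>F. T v) = {1..Suc m}" using un by auto
      have "T \<in> Tg F (Suc m)"
      proof (rule Tg_I[OF _ _ U])
        fix v assume "v \<notin> F" then show "T v = {}" using uF Tg_out[OF S] unfolding Tv by auto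
      next
        fix v assume "v \<in> F" then show "T v \<noteq> {}" using Tg_ne[OF S] unfolding Tv by auto
      next
        fix v w x assume vw: "v \<in> F" "w \<in> F" "v \<noteq> w" "x \<in> T v" "x \<in> T w"
        show False
        proof (cases "v = u \<or> w = u")
          case True
          then show False using vw sub[of v x] sub[of w x] unfolding Tv
            by (auto split: if_splits)
        next
          case False
          then show False using vw Tg_disj[OF S _ _ vw(3), of x] unfolding Tv by auto
        qed
      next
        fix v w x y assume vw: "v \<in> F" "w \<in> F" "v \<noteq> w" "fst v \<le> fst w" "snd v \<le> snd w" "x \<in> T v" "y \<in> T w"
        have vu: "v \<noteq> u" using maxcellD[OF mc vw(2)] vw by auto
        then have xS: "x \<in> S v" using vw(6) unfolding Tv by auto
        show "x < y"
        proof (cases "w = u")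
          case True
          then have "y = Suc m" using vw(7) unfolding Tv by auto
          then show ?thesis using sub[OF vw(1) vu xS] by auto
        next
          case False
          then have "y \<in> S w" using vw(7) unfolding Tv by auto
          then show ?thesis using Tg_ord[OF S _ _ vw(3-5) xS] vw(1,2) vu False by blast
        qed
      qed
      moreover have "T u = {Suc m}" unfolding Tv by auto
      ultimately show "T \<in> ?A" by blast
    qed
  qed
  then show ?thesis by (rule bij_betw_same_card)
qed


lemma card_Tg_Suc:
  assumes fin: "finite F"
  shows "card (Tg F (Suc m)) = (\<Sum>u\<in>{u. maxcell F u}. card (Tg F m) + card (Tg (F - {u}) m))"
proof -
  let ?X1 = "\<lambda>u. {S\<in>Tg F (Suc m). Suc m \<in> S u \<and> S u \<noteq> {Suc m}}"
  let ?X2 = "\<lambda>u. {S\<in>Tg F (Suc m). S u = {Suc m}}"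
  let ?M = "{u. maxcell F u}"
  have finM: "finite ?M" using fin by (rule finite_subset[rotated]) (auto simp: maxcell_def)
  have eq: "Tg F (Suc m) = (\<Union>u\<in>?M. ?X1 u \<union> ?X2 u)"
  proof
    show "Tg F (Suc m) \<subseteq> (\<Union>u\<in>?M. ?X1 u \<union> ?X2 u)"
    proof
      fix S assume S: "S \<in> Tg F (Suc m)"
      then have "Suc m \<in> (\<Union>v\<in>F. S v)" using Tg_union[OF S] by auto
      then obtain u where u: "u \<in> F" "Suc m \<in> S u" by blast
      have "maxcell F u" using Tg_top_max[OF S u] .
      then show "S \<in> (\<Union>u\<in>?M. ?X1 u \<union> ?X2 u)" using S u by (intro UN_I[of u]) auto
    qed
  qed auto
  have fT: "finite (Tg F (Suc m))" using Tg_fin[OF fin] .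
  have "card (Tg F (Suc m)) = card (\<Union>u\<in>?M. ?X1 u \<union> ?X2 u)"
    by (rule arg_cong[OF eq])
  also have "\<dots> = (\<Sum>u\<in>?M. card (?X1 u \<union> ?X2 u))"
  proof (rule card_UN_disjoint[OF finM])
    show "\<forall>i\<in>?M. finite (?X1 i \<union> ?X2 i)" using fT by auto
    show "\<forall>i\<in>?M. \<forall>j\<in>?M. i \<noteq> j \<longrightarrow> (?X1 i \<union> ?X2 i) \<inter> (?X1 j \<union> ?X2 j) = {}"
    proof (intro ballI impI)
      fix i j assume ij: "i \<in> ?M" "j \<in> ?M" "i \<noteq> j"
      then have F: "i \<in> F" "j \<in> F" by (auto simp: maxcell_def)
      show "(?X1 i \<union> ?X2 i) \<inter> (?X1 j \<union> ?X2 j) = {}"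
      proof (rule equals0I)
        fix S assume "S \<in> (?X1 i \<union> ?X2 i) \<inter> (?X1 j \<union> ?X2 j)"
        then have S: "S \<in> Tg F (Suc m)" "Suc m \<in> S i" "Suc m \<in> S j" by auto
        show False using Tg_top_only[OF S(1) F(1) S(2) F(2)] ij(3) S(3) by simp
      qed
    qed
  qed
  also have "\<dots> = (\<Sum>u\<in>?M. card (?X1 u) + card (?X2 u))"
  proof (rule sum.cong[OF refl])
    fix u assume "u \<in> ?M"
    show "card (?X1 u \<union> ?X2 u) = card (?X1 u) + card (?X2 u)"
    proof (rule card_Un_disjoint)
      show "finite (?X1 u)" using fT by simp
      show "finite (?X2 u)" using fT by simp
      show "?X1 u \<inter> ?X2 u = {}" by auto
    qed
  qed
  also have "\<dots> = (\<Sum>u\<in>?M. card (Tg F m) + card (Tg (F - {u}) m))"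
  proof (rule sum.cong[OF refl])
    fix u assume "u \<in> ?M"
    then have mc: "maxcell F u" by simp
    show "card (?X1 u) + card (?X2 u) = card (Tg F m) + card (Tg (F - {u}) m)"
      using card_X1[OF mc, of m] card_X2[OF mc, of m] by simp
  qed
  finally show ?thesis .
qed


lemma mem_fer: "(i,j) \<in> ferrers [a,c] \<longleftrightarrow> (i=0 \<and> j<a) \<or> (i=1 \<and> j<c)"
  unfolding ferrers_def by (auto simp: less_2_cases_iff nth_Cons split: nat.splits)

lemma fer_fin: "finite (ferrers [a,c])"
proof -
  have "ferrers [a,c] \<subseteq> {0..1} \<times> {0..<max a c}" using mem_fer by fastforce
  then show ?thesis by (rule finite_subset) auto
qed

lemma maxcells:
  assumes ca: "c \<le> a"
  shows "{u. maxcell (ferrers [a,c]) u} = (if 0<c then {(1,c-1)} else {}) \<union> (if c<a then {(0,a-1)} else {})"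
proof (rule set_eqI)
  fix u :: "nat \<times> nat"
  obtain i j where u: "u = (i,j)" by (cases u)
  have "maxcell (ferrers [a,c]) (i,j) \<longleftrightarrow> (0<c \<and> (i,j) = (1,c-1)) \<or> (c<a \<and> (i,j) = (0,a-1))"
  proof
    assume mc: "maxcell (ferrers [a,c]) (i,j)"
    have ij: "(i=0 \<and> j<a) \<or> (i=1 \<and> j<c)" using mc unfolding maxcell_def mem_fer by blast
    have D: "\<And>i' j'. (i'=0 \<and> j'<a) \<or> (i'=1 \<and> j'<c) \<Longrightarrow> i \<le> i' \<Longrightarrow> j \<le> j' \<Longrightarrow> i' = i \<and> j' = j"
    proof -
      fix i' j' assume h: "(i'=0 \<and> j'<a) \<or> (i'=1 \<and> j'<c)" "i \<le> i'" "j \<le> j'"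
      have "(i',j') \<in> ferrers [a,c]" using h(1) by (auto simp: mem_fer)
      from maxcellD[OF mc this] h(2,3) show "i' = i \<and> j' = j" by simp
    qed
    show "(0<c \<and> (i,j) = (1,c-1)) \<or> (c<a \<and> (i,j) = (0,a-1))"
    proof (cases "i = 0")
      case True
      then have j: "j < a" using ij by simp
      have "\<not> Suc j < a" using D[of 0 "Suc j"] True by auto
      then have ja: "j = a - 1" using j by simp
      have "\<not> j < c" using D[of 1 j] True by auto
      then show ?thesis using True ja j by auto
    next
      case False
      then have i1: "i = 1" "j < c" using ij by auto
      have "\<not> Suc j < c" using D[of 1 "Suc j"] i1 by auto
      then show ?thesis using i1 by auto
    qed
  next
    assume "(0<c \<and> (i,j) = (1,c-1)) \<or> (c<a \<and> (i,j) = (0,a-1))"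
    then show "maxcell (ferrers [a,c]) (i,j)"
    proof
      assume h: "0<c \<and> (i,j) = (1,c-1)"
      show ?thesis unfolding maxcell_def
      proof (intro conjI ballI impI)
        show "(i,j) \<in> ferrers [a,c]" using h ca by (simp add: mem_fer)
        fix v assume "v \<in> ferrers [a,c]" "fst (i,j) \<le> fst v \<and> snd (i,j) \<le> snd v"
        then show "v = (i,j)" using h by (cases v) (auto simp: mem_fer)
      qed
    next
      assume h: "c<a \<and> (i,j) = (0,a-1)"
      show ?thesis unfolding maxcell_def
      proof (intro conjI ballI impI)
        show "(i,j) \<in> ferrers [a,c]" using h by (simp add: mem_fer)
        fix v assume "v \<in> ferrers [a,c]" "fst (i,j) \<le> fst v \<and> snd (i,j) \<le> snd v"
        then show "v = (i,j)" using h by (cases v) (auto simp: mem_fer)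
      qed
    qed
  qed
  then show "u \<in> {u. maxcell (ferrers [a,c]) u} \<longleftrightarrow> u \<in> (if 0<c then {(1,c-1)} else {}) \<union> (if c<a then {(0,a-1)} else {})"
    unfolding u by auto
qed



lemma fer_rm1: "0 < c \<Longrightarrow> ferrers [a,c] - {(1,c-1)} = ferrers [a,c-1]"
proof (rule set_eqI)
  fix u :: "nat\<times>nat" assume c: "0 < c"
  obtain i j where u: "u = (i,j)" by (cases u)
  show "u \<in> ferrers [a,c] - {(1,c-1)} \<longleftrightarrow> u \<in> ferrers [a,c-1]"
    unfolding u using c by (auto simp: mem_fer)
qed

lemma fer_rm0: "c < a \<Longrightarrow> ferrers [a,c] - {(0,a-1)} = ferrers [a-1,c]"
proof (rule set_eqI)
  fix u :: "nat\<times>nat" assume c: "c < a"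
  obtain i j where u: "u = (i,j)" by (cases u)
  show "u \<in> ferrers [a,c] - {(0,a-1)} \<longleftrightarrow> u \<in> ferrers [a-1,c]"
    unfolding u using c by (auto simp: mem_fer)
qed

lemma fer00: "ferrers [0,0] = {}"
proof (rule set_eqI)
  fix u :: "nat\<times>nat"
  obtain i j where u: "u = (i,j)" by (cases u)
  show "u \<in> ferrers [0,0] \<longleftrightarrow> u \<in> {}" unfolding u by (simp add: mem_fer)
qed

lemma Tg_empty0: "Tg {} 0 = {\<lambda>_. {}}"
proof (rule set_eqI)
  fix S
  show "S \<in> Tg {} 0 \<longleftrightarrow> S \<in> {\<lambda>_. {}}"
  proof
    assume "S \<in> Tg {} 0"
    then have "S u = {}" for u using Tg_out by blast
    then show "S \<in> {\<lambda>_. {}}" by auto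
  next
    assume "S \<in> {\<lambda>_. {}}"
    then have S: "S = (\<lambda>_. {})" by simp
    show "S \<in> Tg {} 0" by (rule Tg_I) (auto simp: S)
  qed
qed

lemma Tg_emptySuc: "Tg {} (Suc m) = {}"
proof (rule equals0I)
  fix S assume "S \<in> Tg {} (Suc m)"
  from Tg_union[OF this] show False by simp
qed

lemma Tg_ne0: assumes "F \<noteq> {}" shows "Tg F 0 = {}"
proof (rule equals0I)
  fix S assume S: "S \<in> Tg F 0"
  obtain u where u: "u \<in> F" using assms by blast
  have "S u \<subseteq> {}" using Tg_sub[OF S u] by simp
  then show False using Tg_ne[OF S u] by simp
qed

fun g :: "nat \<Rightarrow> nat \<Rightarrow> nat \<Rightarrow> nat" where
  "g a c 0 = (if a = 0 \<and> c = 0 then 1 else 0)"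
| "g a c (Suc m) = (if c \<le> a then (if c < a then g a c m + g (a-1) c m else 0)
        + (if 0 < c then g a c m + g a (c-1) m else 0) else 0)"

lemma card_g: "c \<le> a \<Longrightarrow> card (Tg (ferrers [a,c]) m) = g a c m"
proof (induction m arbitrary: a c)
  case 0
  then show ?case
  proof (cases "a = 0 \<and> c = 0")
    case True then show ?thesis by (simp add: fer00 Tg_empty0)
  next
    case False
    then have "ferrers [a,c] \<noteq> {}" using 0 mem_fer[of 0 0 a c] by auto
    then show ?thesis using False by (simp add: Tg_ne0)
  qed
next
  case (Suc m)
  let ?F = "ferrers [a,c]"
  have "card (Tg ?F (Suc m)) = (\<Sum>u\<in>{u. maxcell ?F u}. card (Tg ?F m) + card (Tg (?F - {u}) m))"
    by (rule card_Tg_Suc[OF fer_fin])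
  also have "\<dots> = (if c < a then g a c m + g (a-1) c m else 0)
        + (if 0 < c then g a c m + g a (c-1) m else 0)"
  proof -
    have A: "card (Tg ?F m) = g a c m" using Suc by auto
    show ?thesis
    proof (cases "0 < c")
      case c: True
      have B: "card (Tg (?F - {(1,c-1)}) m) = g a (c-1) m" unfolding fer_rm1[OF c]
        using Suc.IH[of "c-1" a] Suc.prems c by simp
      show ?thesis
      proof (cases "c < a")
        case True
        have C: "card (Tg (?F - {(0,a-1)}) m) = g (a-1) c m" unfolding fer_rm0[OF True]
          using Suc.IH[of c "a-1"] True by simp
        have "{u. maxcell ?F u} = {(1,c-1), (0,a-1)}" using maxcells[OF Suc.prems] c True by auto
        note M = this
        show ?thesis unfolding M using A B C c True by simp
      next
        case False
        have "{u. maxcell ?F u} = {(1,c-1)}" using maxcells[OF Suc.prems] c False by auto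
        note M = this
        show ?thesis unfolding M using A B c False by simp
      qed
    next
      case c: False
      show ?thesis
      proof (cases "c < a")
        case True
        have C: "card (Tg (?F - {(0,a-1)}) m) = g (a-1) c m" unfolding fer_rm0[OF True]
          using Suc.IH[of c "a-1"] True by simp
        have "{u. maxcell ?F u} = {(0,a-1)}" using maxcells[OF Suc.prems] c True by auto
        note M = this
        show ?thesis unfolding M using A C c True by simp
      next
        case False
        have "{u. maxcell ?F u} = {}" using maxcells[OF Suc.prems] c False by auto
        note M = this
        show ?thesis unfolding M using c False by simp
      qed
    qed
  qed
  also have "\<dots> = g a c (Suc m)" using Suc.prems by simp
  finally show ?case .
qed



lemma g_zero: "m < a + c \<Longrightarrow> g a c m = 0"
  by (induction m arbitrary: a c) auto

lemma g00: "g 0 0 (Suc m) = 0" by simp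

lemma g_h0: "g (Suc h) 0 (Suc m) = m choose h"
proof (induction m arbitrary: h)
  case 0
  then show ?case by (cases h) auto
next
  case (Suc m)
  show ?case
  proof (cases h)
    case 0 then show ?thesis using Suc[of 0] by simp
  next
    case (Suc h') then show ?thesis using Suc.IH[of h] Suc.IH[of h'] by simp
  qed
qed

definition FF :: "nat \<Rightarrow> nat \<Rightarrow> nat" where
  "FF m h = (\<Sum>c\<in>{1..m}. g (c+h) c m)"

lemma sum_ext: "(\<Sum>c\<in>{1..Suc m}. g (c+h) c m) = FF m h"
  unfolding FF_def by (simp add: g_zero)

lemma FF_rec: "FF (Suc m) h = (if 0 < h then 2 * FF m h + FF m (h-1) else FF m h) + g (h+1) 0 m + FF m (h+1)"
proof -
  have e: "g (c+h) c (Suc m) = (if 0 < h then 2 * g (c+h) c m + g (c+(h-1)) c m else g (c+h) c m)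
       + g (Suc (c-1) + h) (c-1) m" if "1 \<le> c" for c
    using that by (cases c) auto
  have "FF (Suc m) h = (\<Sum>c\<in>{1..Suc m}. (if 0 < h then 2 * g (c+h) c m + g (c+(h-1)) c m else g (c+h) c m)
       + g (Suc (c-1) + h) (c-1) m)"
    unfolding FF_def by (rule sum.cong) (auto simp: e)
  also have "\<dots> = (if 0 < h then 2 * (\<Sum>c\<in>{1..Suc m}. g (c+h) c m) + (\<Sum>c\<in>{1..Suc m}. g (c+(h-1)) c m)
        else (\<Sum>c\<in>{1..Suc m}. g (c+h) c m)) + (\<Sum>c\<in>{1..Suc m}. g (Suc (c-1) + h) (c-1) m)"
    by (simp add: sum.distrib sum_distrib_left)
  also have "(\<Sum>c\<in>{1..Suc m}. g (Suc (c-1) + h) (c-1) m) = (\<Sum>c\<in>{0..m}. g (c + (h+1)) c m)"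
  proof -
    have "(\<Sum>c\<in>{1..Suc m}. g (Suc (c-1) + h) (c-1) m) = (\<Sum>c\<in>{0..m}. g (Suc (Suc c - 1) + h) (Suc c - 1) m)"
      using sum.shift_bounds_cl_Suc_ivl[of "\<lambda>c. g (Suc (c-1) + h) (c-1) m" 0 m] by simp
    then show ?thesis by simp
  qed
  also have "\<dots> = g (h+1) 0 m + FF m (h+1)"
    unfolding FF_def by (subst sum.atLeast_Suc_atMost) simp_all
  finally show ?thesis unfolding sum_ext by simp
qed



definition bi :: "int \<Rightarrow> int \<Rightarrow> int" where
  "bi n k = (if n < 0 \<or> k < 0 then 0 else int (nat n choose nat k))"

lemma bi_pascal: assumes "1 \<le> n" shows "bi n k = bi (n-1) (k-1) + bi (n-1) k"
proof -
  consider "k < 0" | "k = 0" | "k > 0" by linarith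
  then show ?thesis
  proof cases
    case 1 then show ?thesis by (simp add: bi_def)
  next
    case 2 then show ?thesis using assms by (simp add: bi_def)
  next
    case 3
    have n: "nat n = Suc (nat (n-1))" using assms by simp
    have k: "nat k = Suc (nat (k-1))" using 3 by simp
    show ?thesis using assms 3 unfolding bi_def n k by simp
  qed
qed

lemma bi_sym: assumes "0 \<le> n" shows "bi n k = bi n (n-k)"
proof -
  consider "k < 0" | "k > n" | "0 \<le> k \<and> k \<le> n" by linarith
  then show ?thesis
  proof cases
    case 1 then show ?thesis by (simp add: bi_def)
  next
    case 2 then show ?thesis by (simp add: bi_def)
  next
    case 3
    have "nat (n - k) = nat n - nat k" using 3 by (simp add: nat_diff_distrib)
    then show ?thesis using assms 3 binomial_symmetric[of "nat k" "nat n"] unfolding bi_def by (simp add: nat_le_eq_zle)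
  qed
qed

definition cl :: "nat \<Rightarrow> int \<Rightarrow> int" where
  "cl p h = bi (2*int p+2) (int p+1-h) - bi (2*int p+2) (int p-h) - bi (int p) (h-1)"

lemma bi_pascal': "0 \<le> n \<Longrightarrow> bi (n+1) k = bi n (k-1) + bi n k"
  using bi_pascal[of "n+1" k] by simp

lemma bi_pascal2: "0 \<le> N \<Longrightarrow> bi (N+2) k = bi N (k-2) + 2 * bi N (k-1) + bi N k"
proof -
  assume N: "0 \<le> N"
  have a: "bi (N+2) k = bi (N+1) (k-1) + bi (N+1) k" using bi_pascal'[of "N+1" k] N by (simp add: ac_simps)
  have b: "bi (N+1) (k-1) = bi N (k-2) + bi N (k-1)" using bi_pascal'[OF N, of "k-1"] by simp
  have c: "bi (N+1) k = bi N (k-1) + bi N k" using bi_pascal'[OF N, of k] by simp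
  show ?thesis using a b c by simp
qed

lemma cl_rec: "cl (Suc p) h = 2 * cl p h + cl p (h-1) + cl p (h+1) + bi (int p + 1) h"
proof -
  define N where "N = 2 * int p + 2"
  define t where "t = int p - h"
  have N0: "0 \<le> N" unfolding N_def by simp
  have L: "cl (Suc p) h = bi (N+2) (t+2) - bi (N+2) (t+1) - bi (int p + 1) (h-1)"
    unfolding cl_def N_def t_def by (simp add: algebra_simps)
  have R1: "cl p h = bi N (t+1) - bi N t - bi (int p) (h-1)"
    unfolding cl_def N_def t_def by (simp add: algebra_simps)
  have R2: "cl p (h-1) = bi N (t+2) - bi N (t+1) - bi (int p) (h-1-1)"
    unfolding cl_def N_def t_def by (simp add: algebra_simps)
  have R3: "cl p (h+1) = bi N t - bi N (t-1) - bi (int p) h"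
    unfolding cl_def N_def t_def by (simp add: algebra_simps)
  have P1: "bi (N+2) (t+2) = bi N t + 2 * bi N (t+1) + bi N (t+2)" using bi_pascal2[OF N0, of "t+2"] by (simp add: ac_simps)
  have P2: "bi (N+2) (t+1) = bi N (t-1) + 2 * bi N t + bi N (t+1)" using bi_pascal2[OF N0, of "t+1"] by (simp add: ac_simps)
  have Q1: "bi (int p + 1) (h-1) = bi (int p) (h-1-1) + bi (int p) (h-1)" using bi_pascal'[of "int p" "h-1"] by simp
  have Q2: "bi (int p + 1) h = bi (int p) (h-1) + bi (int p) h" using bi_pascal'[of "int p" h] by simp
  show ?thesis unfolding L R1 R2 R3 P1 P2 Q1 Q2 by simp
qed

lemma cl_neg: "cl p (-1) = - cl p 0"
proof -
  define N where "N = 2 * int p + 2"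
  have A: "bi N (int p + 1 - (-1)) = bi N (int p - 0)"
  proof -
    have "bi N (int p + 1 - (-1)) = bi N (N - (int p + 1 - (-1)))" by (rule bi_sym) (simp add: N_def)
    also have "N - (int p + 1 - (-1)) = int p - 0" by (simp add: N_def)
    finally show ?thesis .
  qed
  have B: "bi (int p) (-1-1) = 0" "bi (int p) (0-1) = 0" by (simp_all add: bi_def)
  show ?thesis unfolding cl_def N_def[symmetric] A B by simp
qed

lemma FF_closed: "int (FF (p+2) h) = cl p (int h)"
proof (induction p arbitrary: h)
  case 0
  have "FF 2 h = g (1+h) 1 2 + g (2+h) 2 2" unfolding FF_def by (simp add: numeral_2_eq_2)
  also have "\<dots> = (if h = 0 then 1 else 0)"
    by (cases h) (auto simp: g_zero numeral_2_eq_2)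
  finally have F2: "FF 2 h = (if h = 0 then 1 else 0)" .
  have C: "cl 0 (int h) = (if h = 0 then 1 else 0)"
    unfolding cl_def bi_def by (cases "h = 0"; cases "h = 1") auto
  have F2': "FF (Suc (Suc 0)) h = (if h = 0 then 1 else 0)" using F2 by (simp add: numeral_2_eq_2)
  show ?case using F2' C by simp
next
  case (Suc p)
  have r: "FF (Suc p + 2) h = (if 0 < h then 2 * FF (p+2) h + FF (p+2) (h-1) else FF (p+2) h) + (Suc p choose h) + FF (p+2) (h+1)"
    using FF_rec[of "p+2" h] g_h0[of h "Suc p"] by simp
  have n1: "nat (int p + 1) = Suc p" by simp
  have bb: "int (Suc p choose h) = bi (int p + 1) (int h)" unfolding bi_def n1 by simp
  show ?case
  proof (cases "0 < h")
    case True
    have e: "int (h - 1) = int h - 1" using True by simp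
    have e2: "cl p (1 + int h) = cl p (int h + 1)" by (simp add: ac_simps)
    show ?thesis using e e2 using r True Suc.IH[of h] Suc.IH[of "h-1"] Suc.IH[of "h+1"] cl_rec[of p "int h"] bb by simp
  next
    case False
    then show ?thesis using r Suc.IH[of 0] Suc.IH[of 1] cl_rec[of p 0] cl_neg[of p] bb by simp
  qed
qed



lemma cat_aux:
  fixes C D k :: nat
  assumes eq: "Suc k * D = k * C"
  shows "C div Suc k = C - D" "D \<le> C"
proof -
  have "Suc k * D \<le> Suc k * C" using eq by simp
  then show le: "D \<le> C" by (simp only: Suc_mult_le_cancel1)
  have "Suc k * (C - D) = Suc k * C - Suc k * D" by (rule diff_mult_distrib2)
  also have "\<dots> = C" using eq by simp
  finally have "C = Suc k * (C - D)" by simp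
  then show "C div Suc k = C - D" by (metis nonzero_mult_div_cancel_left nat.distinct(1))
qed

lemma catalan_eq: "int (catalan (Suc q)) = int ((2*Suc q) choose Suc q) - int ((2*Suc q) choose Suc (Suc q))"
proof -
  define n where "n = 2 * Suc q"
  define k where "k = Suc q"
  have a: "Suc k * (n choose Suc k) = n * ((n - 1) choose k)" by (rule binomial_absorption)
  have b: "(n - k) * (n choose k) = n * ((n - 1) choose k)" by (rule binomial_absorb_comp)
  have c: "n - k = k" by (simp add: n_def k_def)
  have eq: "Suc k * (n choose Suc k) = k * (n choose k)" using a b c by simp
  have "catalan k = (n choose k) div Suc k" unfolding catalan_def n_def k_def by simp
  then have "catalan k = (n choose k) - (n choose Suc k)" using cat_aux(1)[OF eq] by simp
  then show ?thesis using cat_aux(2)[OF eq] unfolding n_def k_def by simp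
qed

theorem mainTheorem1:
  fixes n :: nat
  assumes "n \<ge> 2"
  shows "(\<Sum>(b, k) \<in> {(b, k). b \<ge> 1 \<and> 2 * b + k = n}. card (SYT_plus k [b, b]))
         = catalan (n - 1)"
proof -
  have set: "{(b, k). b \<ge> 1 \<and> 2 * b + k = n} = (\<lambda>b. (b, n - 2*b)) ` {b. 1 \<le> b \<and> 2*b \<le> n}"
    by (auto simp: image_iff)
  have inj: "inj_on (\<lambda>b. (b, n - 2*b)) {b. 1 \<le> b \<and> 2*b \<le> n}" by (auto simp: inj_on_def)
  have "(\<Sum>(b, k) \<in> {(b, k). b \<ge> 1 \<and> 2 * b + k = n}. card (SYT_plus k [b, b]))
      = (\<Sum>b\<in>{b. 1 \<le> b \<and> 2*b \<le> n}. card (SYT_plus (n - 2*b) [b, b]))"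
    unfolding set sum.reindex[OF inj] comp_def by simp
  also have "\<dots> = (\<Sum>b\<in>{b. 1 \<le> b \<and> 2*b \<le> n}. g b b n)"
  proof (rule sum.cong[OF refl])
    fix b assume "b \<in> {b. 1 \<le> b \<and> 2*b \<le> n}"
    then have "b + b + (n - 2*b) = n" by simp
    then show "card (SYT_plus (n - 2*b) [b, b]) = g b b n" by (simp add: SYT_eq card_g)
  qed
  also have "\<dots> = (\<Sum>b\<in>{1..n}. g b b n)"
  proof (rule sum.mono_neutral_left)
    show "finite {1..n}" by simp
    show "{b. 1 \<le> b \<and> 2*b \<le> n} \<subseteq> {1..n}" by auto
    show "\<forall>i\<in>{1..n} - {b. 1 \<le> b \<and> 2*b \<le> n}. g i i n = 0"
    proof
      fix i assume "i \<in> {1..n} - {b. 1 \<le> b \<and> 2*b \<le> n}"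
      then have "n < i + i" by auto
      then show "g i i n = 0" by (rule g_zero)
    qed
  qed
  also have "\<dots> = FF n 0" unfolding FF_def by simp
  finally have S: "(\<Sum>(b, k) \<in> {(b, k). b \<ge> 1 \<and> 2 * b + k = n}. card (SYT_plus k [b, b])) = FF n 0" .
  obtain q where q: "n = q + 2" using assms by (metis add.commute le_Suc_ex)
  have "int (FF n 0) = cl q 0" using FF_closed[of q 0] q by simp
  also have "\<dots> = bi (2*int q+2) (int q+1) - bi (2*int q+2) (int q)" unfolding cl_def by (simp add: bi_def)
  also have "bi (2*int q+2) (int q) = bi (2*int q+2) (int q + 2)" using bi_sym[of "2*int q+2" "int q"] by simp
  also have "bi (2*int q+2) (int q+1) - bi (2*int q+2) (int q + 2) = int (catalan (n - 1))"
  proof -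
    have e1: "nat (2*int q+2) = 2 * Suc q" "nat (int q+1) = Suc q" "nat (int q + 2) = Suc (Suc q)" by auto
    show ?thesis unfolding bi_def e1 using catalan_eq[of q] q by simp
  qed
  finally show ?thesis using S by simp
qed


end
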